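(* Let $F$ be a finite field with $q$ elements, let $C\subseteq F^n$ be a balanced code with information length $d$, and let $C^{\le\delta}$ be the set of codewords of $C$ whose relative weight is at most $\delta$. If $0\le\delta\le 1-q^{-1}$, then $|C^{\le\delta}|\le q^{d\,h_q(\delta)}$.
   Context: The relative weight of $\mathbf{a}\in F^n$ is $\mathrm{w}(\mathbf{a})/n$ where $\mathrm{w}$ is Hamming weight. For $I=\{1,\dots,n\}$ and a subset $I'=\{i_1<\dots<i_d\}$, the projection $F^I\to F^{I'}$ sends $(a_1,\dots,a_n)$ to $(a_{i_1},\dots,a_{i_d})$. A subset $C\subseteq F^n$ is a balanced code with information length $d$ if there exist subsets $I_1,\dots,I_s$ of $I$ (repetitions allowed), each of cardinality $d$, and an integer $t$ such that (i) every index $i\in I$ lies in exactly $t$ of the sets $I_j$; (ii) for each $j$, the projection $F^I\to F^{I_j}$ maps $C$ bijectively onto $F^{I_j}$. The $q$-ary entropy is $h_q(x)=x\log_q(q-1)-x\log_q x-(1-x)\log_q(1-x)$ with $0\log_q0=0$. *)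

theory Defs
  imports "HOL-Analysis.Analysis"
begin

text \<open>Words of length n over F are lists of length n; coordinates are indexed by 0..n-1.\<close>

definition hamming_weight :: "'a::zero list \<Rightarrow> nat" where
  "hamming_weight x = card {i. i < length x \<and> x ! i \<noteq> 0}"

definition relative_weight :: "'a::zero list \<Rightarrow> real" where
  "relative_weight x = real (hamming_weight x) / real (length x)"

definition proj :: "nat set \<Rightarrow> 'a list \<Rightarrow> (nat \<Rightarrow> 'a)" where
  "proj J x = restrict (\<lambda>i. x ! i) J"

text \<open>Balanced code with information length d: a nonempty family I_1..I_s (a list, repetitions
allowed) of d-subsets of the index set, covering each index exactly t times, each projection
mapping C bijectively onto F^{I_j}.\<close>
definition balanced_code :: "nat \<Rightarrow> nat \<Rightarrow> 'a list set \<Rightarrow> bool" where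
  "balanced_code n d C \<longleftrightarrow>
     (\<forall>x\<in>C. length x = n) \<and>
     (\<exists>Is :: nat set list. \<exists>t :: nat.
        Is \<noteq> [] \<and>
        (\<forall>J\<in>set Is. J \<subseteq> {..<n} \<and> card J = d) \<and>
        (\<forall>i<n. card {j. j < length Is \<and> i \<in> Is ! j} = t) \<and>
        (\<forall>J\<in>set Is. bij_betw (proj J) C (PiE J (\<lambda>_. UNIV))))"

definition qentropy :: "real \<Rightarrow> real \<Rightarrow> real" where
  "qentropy q x = x * log q (q - 1)
     - (if x = 0 then 0 else x * log q x)
     - (if x = 1 then 0 else (1 - x) * log q (1 - x))"

end

theory Submission
  imports Defs
begin

lemma amgm_exp:
  fixes y :: "'b \<Rightarrow> real"
  assumes "finite S" "S \<noteq> {}" "\<And>j. j \<in> S \<Longrightarrow> y j > 0"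
  shows "exp ((\<Sum>j\<in>S. ln (y j)) / card S) \<le> (\<Sum>j\<in>S. y j) / card S"
proof -
  define c where "c = real (card S)"
  have cS: "c > 0" using assms card_gt_0_iff c_def by auto
  have s1: "(\<Sum>i\<in>S. 1 / c) = 1" using cS c_def by simp
  have "exp (\<Sum>j\<in>S. (1 / c) *\<^sub>R ln (y j)) \<le> (\<Sum>j\<in>S. (1 / c) * exp (ln (y j)))"
    by (rule convex_on_sum[OF assms(1,2) exp_convex s1]) (use cS in simp_all)
  moreover have "(\<Sum>j\<in>S. (1 / c) *\<^sub>R ln (y j)) = (1 / c) * (\<Sum>j\<in>S. ln (y j))"
    by (simp only: scaleR_conv_of_real of_real_def[symmetric] of_real_eq_id id_def sum_distrib_left)
  moreover have "(\<Sum>j\<in>S. (1 / c) * exp (ln (y j))) = (1 / c) * (\<Sum>j\<in>S. y j)"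
    using assms(3) by (simp add: sum_distrib_left)
  ultimately show ?thesis unfolding c_def by simp
qed

lemma double_count:
  fixes G :: "nat \<Rightarrow> real" and Is :: "nat set list"
  assumes "\<forall>J\<in>set Is. J \<subseteq> {..<n}"
  shows "(\<Sum>j<length Is. \<Sum>i\<in>Is!j. G i) = (\<Sum>i<n. real (card {j. j < length Is \<and> i \<in> Is ! j}) * G i)"
proof -
  have "(\<Sum>j<length Is. \<Sum>i\<in>Is!j. G i) = (\<Sum>j<length Is. \<Sum>i<n. if i \<in> Is!j then G i else 0)"
  proof (rule sum.cong[OF refl])
    fix j assume "j \<in> {..<length Is}"
    then have "Is!j \<subseteq> {..<n}" using assms nth_mem by auto
    then have e: "Is!j = {i\<in>{..<n}. i \<in> Is!j}" by auto
    have "(\<Sum>i\<in>Is!j. G i) = (\<Sum>i\<in>{i\<in>{..<n}. i \<in> Is!j}. G i)"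
      by (subst e) (rule refl)
    also have "\<dots> = (\<Sum>i<n. if i \<in> Is!j then G i else 0)"
      by (rule sum.inter_filter) simp
    finally show "(\<Sum>i\<in>Is!j. G i) = (\<Sum>i<n. if i \<in> Is!j then G i else 0)" .
  qed
  also have "\<dots> = (\<Sum>i<n. \<Sum>j<length Is. if i \<in> Is!j then G i else 0)"
    by (rule sum.swap)
  also have "\<dots> = (\<Sum>i<n. real (card {j. j < length Is \<and> i \<in> Is ! j}) * G i)"
  proof (rule sum.cong[OF refl])
    fix i
    have "(\<Sum>j<length Is. if i \<in> Is!j then G i else 0) = (\<Sum>j\<in>{j\<in>{..<length Is}. i \<in> Is!j}. G i)"
      by (rule sum.inter_filter[symmetric]) simp
    also have "{j\<in>{..<length Is}. i \<in> Is!j} = {j. j < length Is \<and> i \<in> Is ! j}" by auto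
    finally show "(\<Sum>j<length Is. if i \<in> Is!j then G i else 0) = real (card {j. j < length Is \<and> i \<in> Is ! j}) * G i"
      by simp
  qed
  finally show ?thesis .
qed

theorem corollary3p4:
  fixes C :: "('a::{finite,field}) list set" and n d :: nat and \<delta> :: real
  assumes "balanced_code n d C"
    and "0 \<le> \<delta>" and "\<delta> \<le> 1 - 1 / real CARD('a)"
  shows "real (card {x\<in>C. relative_weight x \<le> \<delta>})
           \<le> real CARD('a) powr (real d * qentropy (real CARD('a)) \<delta>)"
proof -
  define q where "q = real CARD('a)"
  have "card {0::'a, 1} \<le> CARD('a)" by (rule card_mono) auto
  then have q2: "q \<ge> 2" unfolding q_def by simp
  obtain Is t where len: "\<forall>x\<in>C. length x = n" and Isne: "Is \<noteq> []"
    and Isd: "\<forall>J\<in>set Is. J \<subseteq> {..<n} \<and> card J = d"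
    and cov: "\<forall>i<n. card {j. j < length Is \<and> i \<in> Is ! j} = t"
    and bij: "\<forall>J\<in>set Is. bij_betw (proj J) C (PiE J (\<lambda>_. UNIV))"
    using assms(1) unfolding balanced_code_def by blast
  define s where "s = length Is"
  have s0: "s > 0" using Isne s_def by auto
  obtain J0 where J0: "J0 \<in> set Is" using Isne by fastforce
  have finC: "finite C"
  proof -
    have "finite J0" using Isd J0 finite_subset by blast
    then have "finite (PiE J0 (\<lambda>_. UNIV :: 'a set))" by (intro finite_PiE) auto
    then show ?thesis using bij_betw_finite[OF bij[rule_format, OF J0]] by simp
  qed
  define S where "S = {x\<in>C. relative_weight x \<le> \<delta>}"
  have wle: "real (hamming_weight x) \<le> real n * \<delta>" if "x \<in> S" for x
  proof (cases "n = 0")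
    case True
    then have "length x = 0" using that len S_def by auto
    then show ?thesis unfolding hamming_weight_def using True by simp
  next
    case False
    then have "real (hamming_weight x) / real n \<le> \<delta>"
      using that len unfolding S_def relative_weight_def by auto
    then show ?thesis using False by (simp add: divide_le_eq mult.commute)
  qed
  show ?thesis
  proof (cases "\<delta> = 0")
    case True
    have "S \<subseteq> {replicate n 0}"
    proof
      fix x assume x: "x \<in> S"
      then have "hamming_weight x = 0" using wle[OF x] True by simp
      moreover have "finite {i. i < length x \<and> x ! i \<noteq> 0}" by simp
      ultimately have "\<forall>i<length x. x ! i = 0" unfolding hamming_weight_def by auto
      moreover have "length x = n" using x len S_def by auto
      ultimately show "x \<in> {replicate n 0}" by (auto intro: nth_equalityI)
    qed
    then have "card S \<le> card {replicate n (0::'a)}" by (intro card_mono) auto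
    then have "card S \<le> 1" by simp
    moreover have "qentropy (real CARD('a)) \<delta> = 0" using True unfolding qentropy_def by simp
    ultimately show ?thesis using q2 q_def S_def by simp
  next
    case False
    then have dpos: "\<delta> > 0" using assms(2) by simp
    define a0 where "a0 = \<delta> / (q - 1)"
    define b0 where "b0 = 1 - \<delta>"
    have a0pos: "a0 > 0" using dpos q2 a0_def by simp
    have d1: "\<delta> \<le> 1 - 1/q" using assms(3) q_def by simp
    have iq: "1/q > 0" using q2 by simp
    have b0pos: "b0 > 0" using d1 iq b0_def by linarith
    have ab: "a0 \<le> b0"
    proof -
      have "\<delta> * q \<le> q - 1" using d1 q2 by (simp add: field_simps)
      then have "\<delta> \<le> (1 - \<delta>) * (q - 1)" by (simp add: algebra_simps)
      then show ?thesis using q2 unfolding a0_def b0_def by (simp add: divide_le_eq)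
    qed
    define g where "g = (\<lambda>v::'a. if v = 0 then b0 else a0)"
    have gpos: "g v > 0" for v using a0pos b0pos g_def by simp
    define F where "F = (\<lambda>J (x::'a list). \<Prod>i\<in>J. g (x ! i))"
    define la where "la = ln a0"
    define lb where "lb = ln b0"
    define \<kappa> where "\<kappa> = \<delta> * la + (1 - \<delta>) * lb"
    have lab: "la \<le> lb" using ab a0pos la_def lb_def by simp
    have Jfin: "finite J" if "J \<in> set Is" for J using Isd that finite_subset by blast
    have Fpos: "F J x > 0" if "finite J" for J x unfolding F_def using gpos by (simp add: prod_pos)
    have lnF: "ln (F J x) = (\<Sum>i\<in>J. ln (g (x!i)))" if "finite J" for J x
      unfolding F_def by (rule ln_prod[OF that]) (use gpos in \<open>simp add: less_imp_neq[symmetric]\<close>)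
    have nt: "real n * real t = real s * real d"
    proof -
      have "(\<Sum>j<length Is. \<Sum>i\<in>Is!j. (1::real)) = (\<Sum>i<n. real (card {j. j < length Is \<and> i \<in> Is ! j}) * 1)"
        using Isd by (intro double_count) auto
      moreover have "(\<Sum>j<length Is. \<Sum>i\<in>Is!j. (1::real)) = (\<Sum>j<length Is. real d)"
        using Isd nth_mem by (intro sum.cong) auto
      moreover have "(\<Sum>i<n. real (card {j. j < length Is \<and> i \<in> Is ! j}) * 1) = (\<Sum>i<n. real t)"
        using cov by (intro sum.cong) auto
      ultimately show ?thesis using s_def by simp
    qed
    have sumg: "(\<Sum>v\<in>UNIV. g v) = 1"
    proof -
      have "(\<Sum>v\<in>UNIV. g v) = g 0 + (\<Sum>v\<in>UNIV-{0}. g v)"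
        by (simp add: sum.remove)
      also have "(\<Sum>v\<in>UNIV-{0}. g v) = (\<Sum>v\<in>UNIV-{0::'a}. a0)"
        by (intro sum.cong) (auto simp: g_def)
      also have "\<dots> = (q - 1) * a0" using q_def by (simp add: card_Diff_singleton of_nat_diff)
      finally show ?thesis using q2 unfolding g_def a0_def b0_def by simp
    qed
    have sumF: "(\<Sum>x\<in>C. F J x) = 1" if J: "J \<in> set Is" for J
    proof -
      have "(\<Sum>x\<in>C. F J x) = (\<Sum>x\<in>C. (\<lambda>y. \<Prod>i\<in>J. g (y i)) (proj J x))"
        unfolding F_def proj_def by (intro sum.cong refl prod.cong) auto
      also have "\<dots> = (\<Sum>y\<in>PiE J (\<lambda>_. UNIV). \<Prod>i\<in>J. g (y i))"
        by (rule sum.reindex_bij_betw[OF bij[rule_format, OF J]])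
      also have "\<dots> = (\<Prod>i\<in>J. \<Sum>v\<in>UNIV. g v)"
        by (rule prod_sum_PiE[symmetric]) (auto simp: Jfin[OF J])
      finally show ?thesis using sumg by simp
    qed
    define L where "L = (\<lambda>x. \<Sum>i<n. ln (g (x!i)))"
    have sumlnF: "(\<Sum>j<s. ln (F (Is!j) x)) = real t * L x" for x
    proof -
      have "(\<Sum>j<s. ln (F (Is!j) x)) = (\<Sum>j<length Is. \<Sum>i\<in>Is!j. ln (g (x!i)))"
        unfolding s_def using Jfin nth_mem by (intro sum.cong refl lnF) auto
      also have "\<dots> = (\<Sum>i<n. real (card {j. j < length Is \<and> i \<in> Is ! j}) * ln (g (x!i)))"
        using Isd by (intro double_count) auto
      also have "\<dots> = (\<Sum>i<n. real t * ln (g (x!i)))"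
        using cov by (intro sum.cong) auto
      finally show ?thesis unfolding L_def by (simp add: sum_distrib_left)
    qed
    have Lbound: "L x \<ge> real n * \<kappa>" if x: "x \<in> S" for x
    proof -
      have lx: "length x = n" using x len S_def by auto
      have "L x = (\<Sum>i<n. lb + (if x!i \<noteq> 0 then la - lb else 0))"
        unfolding L_def g_def la_def lb_def by (intro sum.cong) auto
      also have "\<dots> = real n * lb + (\<Sum>i\<in>{i\<in>{..<n}. x!i \<noteq> 0}. la - lb)"
      proof -
        have "(\<Sum>i<n. if x!i \<noteq> 0 then la - lb else 0) = (\<Sum>i\<in>{i\<in>{..<n}. x!i \<noteq> 0}. la - lb)"
          by (rule sum.inter_filter[symmetric]) simp
        then show ?thesis by (simp only: sum.distrib) simp
      qed
      also have "{i\<in>{..<n}. x!i \<noteq> 0} = {i. i < length x \<and> x ! i \<noteq> 0}" using lx by auto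
      finally have "L x = real n * lb + real (hamming_weight x) * (la - lb)"
        unfolding hamming_weight_def by simp
      moreover have "real (hamming_weight x) * (la - lb) \<ge> real n * \<delta> * (la - lb)"
        using wle[OF x] lab by (intro mult_right_mono_neg) auto
      ultimately show ?thesis unfolding \<kappa>_def by (simp add: algebra_simps)
    qed
    have key: "exp (real d * \<kappa>) \<le> (\<Sum>j<s. F (Is!j) x) / s" if x: "x \<in> S" for x
    proof -
      have "real d * \<kappa> = real t * (real n * \<kappa>) / s"
        using nt s0 by (simp add: field_simps)
      also have "\<dots> \<le> real t * L x / s"
        using Lbound[OF x] s0 by (intro divide_right_mono mult_left_mono) auto
      also have "\<dots> = (\<Sum>j<s. ln (F (Is!j) x)) / card {..<s}" using sumlnF by simp
      finally have "exp (real d * \<kappa>) \<le> exp ((\<Sum>j<s. ln (F (Is!j) x)) / card {..<s})" by simp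
      also have "\<dots> \<le> (\<Sum>j<s. F (Is!j) x) / card {..<s}"
        using s0 Jfin nth_mem Fpos unfolding s_def by (intro amgm_exp) auto
      finally show ?thesis by simp
    qed
    have "real (card S) * exp (real d * \<kappa>) = (\<Sum>x\<in>S. exp (real d * \<kappa>))" by simp
    also have "\<dots> \<le> (\<Sum>x\<in>S. (\<Sum>j<s. F (Is!j) x) / s)" by (intro sum_mono key)
    also have "\<dots> \<le> (\<Sum>x\<in>C. (\<Sum>j<s. F (Is!j) x) / s)"
    proof (rule sum_mono2)
      show "finite C" by (rule finC)
      show "S \<subseteq> C" using S_def by auto
      fix x
      have "0 \<le> (\<Sum>j<s. F (Is!j) x)"
        using Jfin nth_mem Fpos s_def by (intro sum_nonneg less_imp_le) auto
      then show "0 \<le> (\<Sum>j<s. F (Is!j) x) / s" by simp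
    qed
    also have "\<dots> = (\<Sum>j<s. \<Sum>x\<in>C. F (Is!j) x) / s"
      by (simp only: sum_divide_distrib[symmetric]) (rule arg_cong2[where f="(/)"], rule sum.swap, rule refl)
    also have "\<dots> = (\<Sum>j<s. 1) / s" using sumF nth_mem s_def by (intro arg_cong2[where f="(/)"] sum.cong) auto
    also have "\<dots> = 1" using s0 by simp
    finally have cS: "real (card S) * exp (real d * \<kappa>) \<le> 1" .
    have hq: "qentropy q \<delta> * ln q = - \<kappa>"
    proof -
      have "\<delta> \<noteq> 1" using d1 iq by linarith
      then have H: "qentropy q \<delta> = \<delta> * log q (q - 1) - \<delta> * log q \<delta> - (1 - \<delta>) * log q (1 - \<delta>)"
        using False unfolding qentropy_def by simp
      have la: "ln a0 = ln \<delta> - ln (q - 1)" using dpos q2 a0_def by (simp add: ln_div)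
      have lq: "ln q > 0" using q2 by simp
      have "qentropy q \<delta> * ln q = \<delta> * (ln (q - 1) / ln q * ln q) - \<delta> * (ln \<delta> / ln q * ln q) - (1 - \<delta>) * (ln (1 - \<delta>) / ln q * ln q)"
        unfolding H log_def by (simp only: left_diff_distrib mult.assoc)
      also have "\<dots> = \<delta> * ln (q - 1) - \<delta> * ln \<delta> - (1 - \<delta>) * ln (1 - \<delta>)"
        using lq by simp
      finally have E: "qentropy q \<delta> * ln q = \<delta> * ln (q - 1) - \<delta> * ln \<delta> - (1 - \<delta>) * ln (1 - \<delta>)" .
      have "- \<kappa> = \<delta> * ln (q - 1) - \<delta> * ln \<delta> - (1 - \<delta>) * ln (1 - \<delta>)"
        unfolding \<kappa>_def la_def lb_def b0_def la by (simp add: algebra_simps)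
      then show ?thesis using E by linarith
    qed
    have "q powr (real d * qentropy q \<delta>) = exp (ln q * (real d * qentropy q \<delta>))"
      using q2 unfolding powr_def by simp
    also have "ln q * (real d * qentropy q \<delta>) = - (real d * \<kappa>)"
      using hq by (simp add: algebra_simps)
    finally have P: "q powr (real d * qentropy q \<delta>) = inverse (exp (real d * \<kappa>))"
      by (simp add: exp_minus)
    have "real (card S) \<le> 1 / exp (real d * \<kappa>)"
      using cS by (simp add: pos_le_divide_eq)
    then have "real (card S) \<le> q powr (real d * qentropy q \<delta>)"
      using P by (simp add: divide_inverse)
    then show ?thesis using S_def q_def by simp
  qed
qed

end
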